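(* Let $\zeta_3=\int_0^\infty \frac{\mathrm{d}t}{\sqrt{1+t^6}}$ and let $\mathrm{sleafh}_3:(-\zeta_3,\zeta_3)\to\mathbb{R}$ be the hyperbolic leaf function of basis $3$. For every $l\in(-\zeta_3,\zeta_3)$, writing $S=\mathrm{sleafh}_3(l)$, $$\Bigl(\mathrm{sleafh}_3\Bigl(\frac l2\Bigr)\Bigr)^2=-\frac12S^2-\frac12\sqrt{1-S^2+S^4}+\frac12\sqrt{-1+S^2+2S^4+\frac{2+2S^6}{\sqrt{1-S^2+S^4}}}.$$
   Context: For a natural number $n$, let $\zeta_n=\int_0^\infty \frac{\mathrm{d}t}{\sqrt{1+t^{2n}}}$. The hyperbolic leaf function $\mathrm{sleafh}_n$ is the solution $r(l)$ on $(-\zeta_n,\zeta_n)$ of $\frac{\mathrm{d}^2r}{\mathrm{d}l^2}=n\,r^{2n-1}$ with $r(0)=0$, $r'(0)=1$; equivalently it is the inverse function of $r\mapsto \int_0^r \frac{\mathrm{d}t}{\sqrt{1+t^{2n}}}$, $r\in\mathbb{R}$. *)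

theory Defs
  imports "HOL-Analysis.Analysis"
begin

definition leaf_zeta :: "nat \<Rightarrow> real" where
  "leaf_zeta n = integral {0..} (\<lambda>t. 1 / sqrt (1 + t ^ (2 * n)))"

definition leafh_int :: "nat \<Rightarrow> real \<Rightarrow> real" where
  "leafh_int n r = (if 0 \<le> r then integral {0..r} (\<lambda>t. 1 / sqrt (1 + t ^ (2 * n)))
                    else - integral {r..0} (\<lambda>t. 1 / sqrt (1 + t ^ (2 * n))))"

definition sleafh :: "nat \<Rightarrow> real \<Rightarrow> real" where
  "sleafh n l = (THE r. leafh_int n r = l)"

end

theory Submission
  imports Defs
begin

definition ff :: "real \<Rightarrow> real" where "ff t = 1 / sqrt (1 + t ^ 6)"

lemma pow6_nonneg: "0 \<le> (t::real) ^ 6"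
  using zero_le_even_power[of 6 t] by simp

lemma onep6_pos: "0 < 1 + (t::real) ^ 6"
  using pow6_nonneg[of t] by linarith

lemma ff_pos: "ff t > 0"
  unfolding ff_def using onep6_pos[of t] by simp

lemma ff_cont: "continuous_on S ff"
  unfolding ff_def
  by (intro continuous_intros) (use onep6_pos in \<open>auto simp: less_imp_neq[symmetric]\<close>)

lemma ff_int: "ff integrable_on {a..b}"
  by (intro integrable_continuous_real ff_cont)

lemma leafh3: "leafh_int 3 r = (if 0 \<le> r then integral {0..r} ff else - integral {r..0} ff)"
  by (simp add: leafh_int_def ff_def[abs_def])

lemma leafh3_alt:
  assumes "M \<ge> 0" "-M \<le> r"
  shows "leafh_int 3 r = integral {-M..r} ff - integral {-M..0} ff"
proof (cases "0 \<le> r")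
  case True
  have "integral {-M..0} ff + integral {0..r} ff = integral {-M..r} ff"
    by (rule Henstock_Kurzweil_Integration.integral_combine) (use assms True ff_int in auto)
  then show ?thesis using True by (simp add: leafh3)
next
  case False
  have "integral {-M..r} ff + integral {r..0} ff = integral {-M..0} ff"
    by (rule Henstock_Kurzweil_Integration.integral_combine) (use assms False ff_int in auto)
  then show ?thesis using False by (simp add: leafh3)
qed

lemma F_deriv: "(leafh_int 3 has_real_derivative ff x) (at x)"
proof -
  define M where "M = \<bar>x\<bar> + 1"
  have M0: "M \<ge> 0" by (simp add: M_def)
  have Mx: "-M < x" "x < M" by (auto simp: M_def)
  have "((\<lambda>y. integral {-M..y} ff) has_real_derivative ff x) (at x within {-M..M})"
    by (intro integral_has_real_derivative ff_cont) (auto simp: M_def)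
  then have "((\<lambda>y. integral {-M..y} ff) has_real_derivative ff x) (at x)"
    by (simp add: at_within_Icc_at M_def)
  then have "((\<lambda>y. integral {-M..y} ff - integral {-M..0} ff) has_real_derivative ff x) (at x)"
    by (auto intro!: derivative_eq_intros)
  then show ?thesis
    by (rule has_field_derivative_transform_within_open[where S="{-M<..<M}"])
       (use leafh3_alt[of M] M0 Mx in auto)
qed

lemma F_cont: "continuous_on S (leafh_int 3)"
  by (meson DERIV_isCont F_deriv continuous_at_imp_continuous_on)

lemma F_0: "leafh_int 3 0 = 0"
  by (simp add: leafh3)

lemma F_strict: "a < b \<Longrightarrow> leafh_int 3 a < leafh_int 3 b"
  by (rule DERIV_pos_imp_increasing) (use F_deriv ff_pos in blast)+

lemma F_mono: "a \<le> b \<Longrightarrow> leafh_int 3 a \<le> leafh_int 3 b"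
  by (metis F_strict order_le_less)

lemma F_inj: "leafh_int 3 a = leafh_int 3 b \<Longrightarrow> a = b"
  by (metis F_strict less_irrefl linorder_neqE)

lemma F_odd: "leafh_int 3 (-r) = - leafh_int 3 r"
proof -
  have "\<exists>c. \<forall>x\<in>UNIV. leafh_int 3 x + leafh_int 3 (-x) = c"
  proof (rule has_field_derivative_zero_constant)
    fix x :: real
    have "((\<lambda>x. leafh_int 3 x + leafh_int 3 (-x)) has_real_derivative ff x + ff (-x) * (-1)) (at x)"
      by (auto intro!: derivative_eq_intros DERIV_chain2[OF F_deriv] F_deriv)
    moreover have "ff (-x) = ff x" by (simp add: ff_def)
    ultimately show "((\<lambda>x. leafh_int 3 x + leafh_int 3 (-x)) has_real_derivative 0) (at x within UNIV)"
      by simp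
  qed auto
  then obtain c where "\<And>x. leafh_int 3 x + leafh_int 3 (-x) = c" by blast
  from this[of 0] this[of r] show ?thesis by (simp add: F_0)
qed

lemma zeta3: "leaf_zeta 3 = integral {0..} ff"
  by (simp add: leaf_zeta_def ff_def[abs_def])

lemma F_above:
  assumes "l < leaf_zeta 3"
  shows "\<exists>r. l < leafh_int 3 r"
proof (cases "ff integrable_on {0..}")
  case False
  then have "l < 0" using assms by (simp add: zeta3 not_integrable_integral)
  then show ?thesis using F_0 by (intro exI[of _ 0]) simp
next
  case True
  define g where "g = (\<lambda>k::nat. \<lambda>x. if x \<in> {..real k} then ff x else 0)"
  have set_eq: "{..real k} \<inter> {0..} = {0..real k}" for k by auto
  have "(\<lambda>k. integral {0..} (g k)) \<longlonglongrightarrow> integral {0..} ff"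
  proof (rule dominated_convergence(2))
    show "g k integrable_on {0..}" for k
      unfolding g_def integrable_restrict_Int set_eq by (rule ff_int)
    show "ff integrable_on {0..}" by (rule True)
    show "norm (g k x) \<le> ff x" if "x \<in> {0..}" for k x
      using ff_pos[of x] by (simp add: g_def)
    show "(\<lambda>k. g k x) \<longlonglongrightarrow> ff x" if "x \<in> {0..}" for x
    proof (rule tendsto_eventually)
      obtain n where "x \<le> real n" using real_arch_simple by blast
      then show "\<forall>\<^sub>F k in sequentially. g k x = ff x"
        unfolding eventually_sequentially g_def
        by (intro exI[of _ n]) auto
    qed
  qed
  moreover have "integral {0..} (g k) = leafh_int 3 (real k)" for k
    unfolding g_def integral_restrict_Int set_eq by (simp add: leafh3)
  ultimately have "(\<lambda>k. leafh_int 3 (real k)) \<longlonglongrightarrow> leaf_zeta 3"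
    by (simp add: zeta3)
  from order_tendstoD(1)[OF this assms] obtain k where "l < leafh_int 3 (real k)"
    by (auto simp: eventually_sequentially)
  then show ?thesis by blast
qed

lemma F_below:
  assumes "- leaf_zeta 3 < l"
  shows "\<exists>r. leafh_int 3 r < l"
proof -
  obtain r where "-l < leafh_int 3 r" using F_above[of "-l"] assms by auto
  then have "leafh_int 3 (-r) < l" by (simp add: F_odd)
  then show ?thesis by blast
qed

lemma sleafh3:
  assumes "l \<in> {- leaf_zeta 3 <..< leaf_zeta 3}"
  shows "leafh_int 3 (sleafh 3 l) = l"
proof -
  obtain a where a: "leafh_int 3 a < l" using F_below assms by auto
  obtain b where b: "l < leafh_int 3 b" using F_above assms by auto
  have "a \<le> b" using a b F_mono[of b a] by (cases "a \<le> b") auto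
  then obtain r where r: "leafh_int 3 r = l"
    using IVT'[of "leafh_int 3" a l b] a b F_cont by auto
  then show ?thesis unfolding sleafh_def
    by (rule theI) (use F_inj r in metis)
qed

definition phi :: "real \<Rightarrow> real" where
  "phi t = 2 * t * sqrt (1 + t ^ 6) / sqrt (1 - 8 * t ^ 6)"

lemma t6_small: "t\<^sup>2 < 1/2 \<Longrightarrow> (t::real) ^ 6 < 1/8"
proof -
  assume "t\<^sup>2 < 1/2"
  then have "(t\<^sup>2) ^ 3 < (1/2) ^ 3"
    by (intro power_strict_mono) auto
  moreover have "(t\<^sup>2) ^ 3 = t ^ 6" "(1/2::real)^3 = 1/8"
    by (simp_all add: power_mult[symmetric] power_divide)
  ultimately show ?thesis by simp
qed

lemma alg1:
  fixes A B t w :: real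
  assumes "A > 0" "B > 0"
  shows "((2*A + 2*t*(6*w/(2*A)))*B - 2*t*A*(-(48*w)/(2*B)))/ B\<^sup>2
        = (2*A\<^sup>2*B\<^sup>2 + 6*(t*w)*B\<^sup>2 + 48*(t*w)*A\<^sup>2)/(A*B^3)"
  using assms by (simp add: field_simps power2_eq_square power3_eq_cube)

lemma phi_deriv:
  assumes "t\<^sup>2 < 1/2"
  shows "(phi has_real_derivative
     2 * (1 + 20 * t^6 - 8 * (t^6)\<^sup>2) / (sqrt (1 + t^6) * sqrt (1 - 8 * t^6) ^ 3)) (at t)"
proof -
  define u where "u = t ^ 6"
  have u0: "0 \<le> u" "u < 1/8" using t6_small[OF assms] pow6_nonneg[of t] by (auto simp: u_def)
  define A where "A = sqrt (1 + u)"
  define B where "B = sqrt (1 - 8 * u)"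
  have A: "A > 0" "A\<^sup>2 = 1 + u" using u0 by (auto simp: A_def)
  have B: "B > 0" "B\<^sup>2 = 1 - 8 * u" using u0 by (auto simp: B_def)
  have E: "(phi has_real_derivative ((2 * sqrt(1+t^6) + 2*t*(6*t^5/(2 * sqrt(1+t^6))))* sqrt(1-8*t^6)
      - 2*t* sqrt(1+t^6)*(-(48*t^5)/(2 * sqrt(1-8*t^6))))/ (sqrt(1-8*t^6))\<^sup>2) (at t)"
    unfolding phi_def[abs_def] using u0 A B
    by (auto intro!: derivative_eq_intros simp: u_def A_def B_def field_simps)
  have t5: "t * t^5 = u" by (simp add: u_def eval_nat_numeral)
  have "((2*A + 2*t*(6*t^5/(2*A)))*B - 2*t*A*(-(48*t^5)/(2*B)))/ B\<^sup>2
        = (2*A\<^sup>2*B\<^sup>2 + 6*u*B\<^sup>2 + 48*u*A\<^sup>2)/(A*B^3)"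
    using alg1[OF A(1) B(1), of t "t^5"] t5 by simp
  also have "\<dots> = 2 * (1 + 20 * u - 8 * u\<^sup>2) / (A * B ^ 3)"
    unfolding A(2) B(2) by (simp add: algebra_simps power2_eq_square)
  finally show ?thesis using E unfolding A_def B_def u_def by simp
qed

lemma final_alg:
  fixes x T :: real
  assumes x0: "0 \<le> x" and x1: "x < 1/2" and T: "T = 4*x*(1+x^3)/(1-8*x^3)"
  shows "x = - (1/2) * T - (1/2) * sqrt (1 - T + T\<^sup>2)
        + (1/2) * sqrt (- 1 + T + 2 * T\<^sup>2 + (2 + 2 * T ^ 3) / sqrt (1 - T + T\<^sup>2))"
proof -
  define c where "c = (1+2*x^2)/(1-2*x)"
  have p1: "1 - 2*x > 0" using x1 by simp
  have p2: "1 + 2*x + 4*x^2 > 0" using x0 by (simp add: add_pos_nonneg)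
  have den: "1 - 8*x^3 = (1-2*x)*(1 + 2*x + 4*x^2)" by (simp add: algebra_simps power2_eq_square power3_eq_cube)
  define d1 where "d1 = 1 - 2*x"
  define d2 where "d2 = 1 + 2*x + 4*x^2"
  have d1: "d1 > 0" using p1 by (simp add: d1_def)
  have d2: "d2 > 0" using p2 by (simp add: d2_def)
  have T2: "T = 4*x*(1+x^3)/(d1*d2)" using T den by (simp add: d1_def d2_def)
  have hT0: "T*(d1*d2) = 4*x*(1+x^3)" using T2 d1 d2 by simp
  have hc: "c*d1 = 1+2*x^2" using d1 by (simp add: c_def d1_def)
  have "(c - T)*(d1*d2) = 1 - 2*x + 6*x^2 + 4*x^3 + 4*x^4"
    using hc hT0 unfolding d1_def d2_def by algebra
  then have cT: "c - T = (1 - 2*x + 6*x^2 + 4*x^3 + 4*x^4)/(d1*d2)"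
    using d1 d2 by (simp add: field_simps)
  have Qpos: "1 - 2*x + 6*x^2 + 4*x^3 + 4*x^4 > 0" using p1 x0 by (simp add: add_pos_nonneg)
  have cTpos: "c - T > 0" unfolding cT using Qpos d1 d2 by simp
  have "T*(2*c-1)*(d1^2*d2) = (c^2-1)*(d1^2*d2)"
    using hc hT0 unfolding d1_def d2_def by algebra
  then have hT: "T*(2*c-1) = c^2-1" using d1 d2 by simp
  have sq: "(c-T)\<^sup>2 = 1 - T + T\<^sup>2" using hT by (simp add: algebra_simps power2_eq_square)
  have a: "sqrt (1 - T + T\<^sup>2) = c - T"
    using sq cTpos by (metis less_imp_le real_sqrt_unique)
  have "(2 + 2 * T ^ 3) / (c - T) = 2*(1+T)*(c-T)"
  proof -
    have "2 + 2 * T ^ 3 = 2*(1+T)*(c-T)\<^sup>2" unfolding sq by (simp add: algebra_simps power2_eq_square power3_eq_cube)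
    then show ?thesis using cTpos by (simp add: field_simps power2_eq_square)
  qed
  then have inner: "- 1 + T + 2 * T\<^sup>2 + (2 + 2 * T ^ 3) / sqrt (1 - T + T\<^sup>2) = (2*x+c)\<^sup>2"
    unfolding a using hc hT unfolding d1_def by algebra
  have "c > 0" unfolding c_def using p1 by (simp add: add_pos_nonneg)
  then have "2*x + c > 0" using x0 by simp
  then have "sqrt (- 1 + T + 2 * T\<^sup>2 + (2 + 2 * T ^ 3) / sqrt (1 - T + T\<^sup>2)) = 2*x + c"
    unfolding inner by simp
  then show ?thesis unfolding a by (simp add: field_simps)
qed

lemma phi_comp_deriv:
  assumes "t\<^sup>2 < 1/2"
  shows "((\<lambda>t. leafh_int 3 (phi t)) has_real_derivative 2 * ff t) (at t)"
proof -
  define u where "u = t ^ 6"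
  have u0: "0 \<le> u" "u < 1/8" using t6_small[OF assms] pow6_nonneg[of t] by (auto simp: u_def)
  define A where "A = sqrt (1 + u)"
  define B where "B = sqrt (1 - 8 * u)"
  have A: "A > 0" "A\<^sup>2 = 1 + u" using u0 by (auto simp: A_def)
  have B: "B > 0" "B\<^sup>2 = 1 - 8 * u" using u0 by (auto simp: B_def)
  define P where "P = 1 + 20 * u - 8 * u\<^sup>2"
  have "8 * u * u \<le> 1 * u" using u0 by (intro mult_right_mono) auto
  then have P: "P > 0" using u0 unfolding P_def power2_eq_square by linarith
  have phit: "phi t = 2 * t * A / B" by (simp add: phi_def A_def B_def u_def)
  have "phi t ^ 6 = 64 * u * (A\<^sup>2)^3 / (B\<^sup>2)^3"
    unfolding phit by (simp add: power_divide power_mult_distrib u_def power_mult[symmetric])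
  also have "\<dots> = 64 * u * (1+u)^3 / (1 - 8*u)^3" unfolding A B ..
  finally have p6: "phi t ^ 6 = 64 * u * (1+u)^3 / (1 - 8*u)^3" .
  have b3: "(1 - 8*u)^3 > 0" using u0 by simp
  have "1 + phi t ^ 6 = P\<^sup>2 / (1 - 8*u)^3"
    unfolding p6 P_def using b3 by (simp add: field_simps) (simp add: algebra_simps power2_eq_square power3_eq_cube)
  also have "\<dots> = (P / B^3)\<^sup>2"
    by (simp add: power_divide power_mult[symmetric] B(2)[symmetric])
  finally have "sqrt (1 + phi t ^ 6) = P / B^3"
    using P B by simp
  then have ffphi: "ff (phi t) = B^3 / P" by (simp add: ff_def)
  have "((\<lambda>t. leafh_int 3 (phi t)) has_real_derivative ff (phi t) * (2 * P / (A * B^3))) (at t)"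
    using DERIV_chain2[OF F_deriv phi_deriv[OF assms]] by (simp add: P_def A_def B_def u_def)
  moreover have "ff (phi t) * (2 * P / (A * B^3)) = 2 * ff t"
    unfolding ffphi using P A B by (simp add: ff_def A_def u_def field_simps)
  ultimately show ?thesis by simp
qed

lemma double:
  assumes "t\<^sup>2 < 1/2"
  shows "leafh_int 3 (phi t) = 2 * leafh_int 3 t"
proof -
  have iff: "x\<^sup>2 < 1/2 \<longleftrightarrow> x \<in> {- sqrt (1/2) <..< sqrt (1/2)}" for x :: real
  proof -
    have "x\<^sup>2 < 1/2 \<longleftrightarrow> sqrt (x\<^sup>2) < sqrt (1/2)" by (simp only: real_sqrt_less_iff)
    also have "\<dots> \<longleftrightarrow> \<bar>x\<bar> < sqrt (1/2)" by simp
    finally show ?thesis by auto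
  qed
  have "\<exists>c. \<forall>x\<in>{- sqrt (1/2) <..< sqrt (1/2)}. leafh_int 3 (phi x) - 2 * leafh_int 3 x = c"
  proof (rule has_field_derivative_zero_constant)
    fix x :: real assume "x \<in> {- sqrt (1/2) <..< sqrt (1/2)}"
    then have x: "x\<^sup>2 < 1/2" using iff by blast
    have "((\<lambda>x. leafh_int 3 (phi x) - 2 * leafh_int 3 x) has_real_derivative 2 * ff x - 2 * ff x) (at x)"
      by (rule DERIV_diff[OF phi_comp_deriv[OF x] DERIV_cmult[OF F_deriv]])
    then show "((\<lambda>x. leafh_int 3 (phi x) - 2 * leafh_int 3 x) has_real_derivative 0)
        (at x within {- sqrt (1/2) <..< sqrt (1/2)})"
      by (simp add: has_field_derivative_at_within)
  qed auto
  then obtain c where c: "\<And>x. x\<^sup>2 < 1/2 \<Longrightarrow> leafh_int 3 (phi x) - 2 * leafh_int 3 x = c"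
    using iff by blast
  have "phi 0 = 0" by (simp add: phi_def)
  then have "c = 0" using c[of 0] by (simp add: F_0)
  then show ?thesis using c[OF assms] by simp
qed

lemma phi_odd: "phi (-t) = - phi t"
  by (simp add: phi_def)

lemma phi_big: "\<exists>t. 0 \<le> t \<and> t\<^sup>2 < 1/2 \<and> r \<le> phi t"
proof -
  define e where "e = 1 / (\<bar>r\<bar> + 2)\<^sup>2"
  have e0: "0 < e" by (simp add: e_def)
  have "(\<bar>r\<bar> + 2)\<^sup>2 \<ge> 4"
    using power_mono[of 2 "\<bar>r\<bar> + 2" 2] by simp
  then have e1: "e \<le> 1/4" unfolding e_def by (simp add: field_simps)
  define t where "t = root 6 ((1 - e) / 8)"
  have t0: "0 \<le> t" using e1 by (simp add: t_def)
  have t6: "t ^ 6 = (1 - e)/8" unfolding t_def using e1 by (simp add: real_root_pow_pos2)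
  have "(1/2) ^ 6 \<le> t ^ 6" unfolding t6 using e1 by (simp add: power_divide)
  then have th: "1/2 \<le> t" using t0 power_le_imp_le_base[of "1/2" 5 t] by (simp add: eval_nat_numeral)
  have "t\<^sup>2 < 1/2"
  proof (rule ccontr)
    assume "\<not> t\<^sup>2 < 1/2"
    then have "(1/2)^3 \<le> (t\<^sup>2)^3" by (intro power_mono) auto
    then have "1/8 \<le> t ^ 6" by (simp add: power_mult[symmetric] power_divide)
    then show False using t6 e0 by simp
  qed
  moreover have "r \<le> phi t"
  proof -
    have B: "sqrt (1 - 8 * t ^ 6) = 1 / (\<bar>r\<bar> + 2)"
    proof -
      have "1 - 8 * t ^ 6 = (1 / (\<bar>r\<bar> + 2))\<^sup>2" unfolding t6 e_def by (simp add: power_divide field_simps)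
      then show ?thesis by simp
    qed
    have A: "sqrt (1 + t ^ 6) \<ge> 1" using pow6_nonneg[of t] by simp
    have "phi t = 2 * t * sqrt (1 + t ^ 6) * (\<bar>r\<bar> + 2)"
      unfolding phi_def B by simp
    also have "\<dots> \<ge> 1 * 1 * (\<bar>r\<bar> + 2)"
      using th A by (intro mult_mono) auto
    finally show ?thesis by simp
  qed
  ultimately show ?thesis using t0 by blast
qed

lemma phi_sq: "phi t ^ 2 = 4 * t\<^sup>2 * (1 + (t\<^sup>2)^3) / (1 - 8 * (t\<^sup>2)^3)" if "t\<^sup>2 < 1/2"
proof -
  have "t ^ 6 < 1/8" using t6_small[OF that] .
  then show ?thesis
    by (simp add: phi_def power_divide power_mult_distrib power_mult[symmetric] pow6_nonneg)
qed

lemma sq_ge_cases: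
  fixes s :: real
  assumes "\<not> s\<^sup>2 < 1/2"
  shows "sqrt (1/2) \<le> s \<or> s \<le> - sqrt (1/2)"
proof -
  have "sqrt (1/2) \<le> sqrt (s\<^sup>2)" using assms by (simp only: real_sqrt_le_iff)
  then show ?thesis by auto
qed

lemma lt_c: "0 \<le> t \<Longrightarrow> t\<^sup>2 < 1/2 \<Longrightarrow> t < sqrt (1/2)"
  using real_less_rsqrt by blast

theorem mainTheorem16:
  fixes l :: real
  assumes "l \<in> {- leaf_zeta 3 <..< leaf_zeta 3}"
  shows "(sleafh 3 (l / 2))\<^sup>2 =
     (let S = sleafh 3 l in
        - (1/2) * S\<^sup>2 - (1/2) * sqrt (1 - S\<^sup>2 + S ^ 4)
        + (1/2) * sqrt (- 1 + S\<^sup>2 + 2 * S ^ 4 + (2 + 2 * S ^ 6) / sqrt (1 - S\<^sup>2 + S ^ 4)))"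
proof -
  have l2: "l/2 \<in> {- leaf_zeta 3 <..< leaf_zeta 3}" using assms by auto
  define s where "s = sleafh 3 (l/2)"
  define S where "S = sleafh 3 l"
  have Fs: "leafh_int 3 s = l/2" unfolding s_def by (rule sleafh3[OF l2])
  have FS: "leafh_int 3 S = l" unfolding S_def by (rule sleafh3[OF assms])
  have s2: "s\<^sup>2 < 1/2"
  proof (rule ccontr)
    assume "\<not> s\<^sup>2 < 1/2"
    then consider "sqrt (1/2) \<le> s" | "s \<le> - sqrt (1/2)" using sq_ge_cases by blast
    then show False
    proof cases
      case 1
      obtain r where r: "l < leafh_int 3 r" using F_above assms by auto
      obtain t where t: "0 \<le> t" "t\<^sup>2 < 1/2" "r \<le> phi t" using phi_big by blast
      have "t < sqrt (1/2)" using lt_c t by blast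
      have "leafh_int 3 r \<le> leafh_int 3 (phi t)" using t F_mono by blast
      also have "\<dots> = 2 * leafh_int 3 t" using double t by blast
      also have "\<dots> < 2 * leafh_int 3 (sqrt (1/2))" using F_strict \<open>t < sqrt (1/2)\<close> by simp
      also have "\<dots> \<le> 2 * leafh_int 3 s" using F_mono 1 by simp
      finally show False using r Fs by simp
    next
      case 2
      obtain r where r: "leafh_int 3 r < l" using F_below assms by auto
      obtain t where t: "0 \<le> t" "t\<^sup>2 < 1/2" "-r \<le> phi t" using phi_big by blast
      have "t < sqrt (1/2)" using lt_c t by blast
      have t': "(-t)\<^sup>2 < 1/2" using t by simp
      have "2 * leafh_int 3 s \<le> 2 * leafh_int 3 (- sqrt (1/2))" using F_mono 2 by simp
      also have "\<dots> < 2 * leafh_int 3 (-t)" using F_strict \<open>t < sqrt (1/2)\<close> by simp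
      also have "\<dots> = leafh_int 3 (phi (-t))" using double[OF t'] by simp
      also have "\<dots> \<le> leafh_int 3 r" using t F_mono by (simp add: phi_odd)
      finally show False using r Fs by simp
    qed
  qed
  have "leafh_int 3 S = leafh_int 3 (phi s)" using FS Fs double[OF s2] by simp
  then have SS: "S = phi s" by (rule F_inj)
  have T: "S\<^sup>2 = 4 * s\<^sup>2 * (1 + (s\<^sup>2)^3) / (1 - 8 * (s\<^sup>2)^3)"
    unfolding SS by (rule phi_sq[OF s2])
  have e4: "S ^ 4 = (S\<^sup>2)\<^sup>2" and e6: "S ^ 6 = (S\<^sup>2) ^ 3"
    by (simp_all add: power_mult[symmetric])
  show ?thesis
    unfolding Let_def S_def[symmetric] s_def[symmetric] e4 e6
    by (rule final_alg[OF _ _ T]) (use s2 in auto)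
qed

end
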